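(* Let $n\ge 5$ and let $\sigma$ be a maximal simplex of $\Delta_n$ that covers all places. Then $N(v)\cap\sigma\neq\emptyset$ for every $v\in\sigma$.
   Context: $\mathbb{I}_n$ is the $n$-dimensional hypercube graph on vertex set $\{0,1\}^n$ (adjacent iff differing in exactly one coordinate), with Hamming distance $d(v,w)=\#\{i: v(i)\ne w(i)\}$, $v(i)$ the $i$-th coordinate. $\Delta_n=\mathcal{VR}(\mathbb{I}_n;3)$ is the simplicial complex whose simplices are the subsets $\sigma\subseteq\{0,1\}^n$ with $d(x,y)\le 3$ for all $x,y\in\sigma$. A simplex $\sigma$ covers all places if for each $i\in[n]=\{1,\dots,n\}$ there are $v,w\in\sigma$ with $v(i)=1$ and $w(i)=0$. $N(v)=\{v^i: i\in[n]\}$, where $v^i$ is $v$ with coordinate $i$ changed. *)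

theory Defs
  imports Main
begin

text \<open>Vertices of the hypercube I_n are functions nat => bool vanishing (False)
outside the coordinate set {1..n}; coordinate i of v is v i (True = 1).\<close>

definition cube :: "nat \<Rightarrow> (nat \<Rightarrow> bool) set" where
  "cube n = {v. \<forall>i. i \<notin> {1..n} \<longrightarrow> \<not> v i}"

definition hdist :: "nat \<Rightarrow> (nat \<Rightarrow> bool) \<Rightarrow> (nat \<Rightarrow> bool) \<Rightarrow> nat" where
  "hdist n v w = card {i \<in> {1..n}. v i \<noteq> w i}"

text \<open>Simplices of Delta_n = VR(I_n; 3): nonempty finite vertex sets of pairwise distance at most 3.\<close>
definition is_simplex :: "nat \<Rightarrow> (nat \<Rightarrow> bool) set \<Rightarrow> bool" where
  "is_simplex n \<sigma> \<longleftrightarrow> \<sigma> \<noteq> {} \<and> finite \<sigma> \<and> \<sigma> \<subseteq> cube n \<and>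
     (\<forall>x\<in>\<sigma>. \<forall>y\<in>\<sigma>. hdist n x y \<le> 3)"

definition maximal_simplex :: "nat \<Rightarrow> (nat \<Rightarrow> bool) set \<Rightarrow> bool" where
  "maximal_simplex n \<sigma> \<longleftrightarrow> is_simplex n \<sigma> \<and> (\<forall>\<tau>. is_simplex n \<tau> \<and> \<sigma> \<subseteq> \<tau> \<longrightarrow> \<tau> = \<sigma>)"

definition covers_all_places :: "nat \<Rightarrow> (nat \<Rightarrow> bool) set \<Rightarrow> bool" where
  "covers_all_places n \<sigma> \<longleftrightarrow> (\<forall>i\<in>{1..n}. \<exists>v\<in>\<sigma>. \<exists>w\<in>\<sigma>. v i \<and> \<not> w i)"

definition flip :: "(nat \<Rightarrow> bool) \<Rightarrow> nat \<Rightarrow> (nat \<Rightarrow> bool)" where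
  "flip v i = v(i := \<not> v i)"

definition nbhd :: "nat \<Rightarrow> (nat \<Rightarrow> bool) \<Rightarrow> (nat \<Rightarrow> bool) set" where
  "nbhd n v = (\<lambda>i. flip v i) ` {1..n}"

end

theory Submission
  imports Defs
begin

lemma symdiff_card:
  assumes "finite A" "finite B"
  shows "card ((A - B) \<union> (B - A)) + 2 * card (A \<inter> B) = card A + card B"
proof -
  have d: "card ((A - B) \<union> (B - A)) = card (A - B) + card (B - A)"
    by (rule card_Un_disjoint) (use assms in auto)
  have "card (A - B) = card A - card (A \<inter> B)" using assms by (simp add: card_Diff_subset_Int)
  moreover have "card (B - A) = card B - card (A \<inter> B)" using assms
    by (metis card_Diff_subset_Int finite_Int inf_commute)
  moreover have "card (A \<inter> B) \<le> card A" "card (A \<inter> B) \<le> card B" using assms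
    by (auto intro: card_mono)
  ultimately show ?thesis using d by linarith
qed

lemma three_ext:
  assumes "card B = 3" "b \<in> B" "c \<in> B" "b \<noteq> c"
  shows "\<exists>x. B = {b,c,x} \<and> x \<noteq> b \<and> x \<noteq> c"
proof -
  have f: "finite B" using assms(1) by (metis card.infinite zero_neq_numeral)
  have "card (B - {b,c}) = 1" using assms f by (simp add: card_Diff_subset)
  then obtain x where x: "B - {b,c} = {x}" by (meson card_1_singletonE)
  then show ?thesis using assms by blast
qed

lemma comb:
  fixes a b c :: nat
  assumes dist: "a \<noteq> b" "b \<noteq> c" "a \<noteq> c"
    and cBa: "card Ba = 3" and cBb: "card Bb = 3" and cBc: "card Bc = 3"
    and na: "a \<notin> Ba" and nb: "b \<notin> Bb" and nc: "c \<notin> Bc"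
    and ia: "card ({a,b,c} \<inter> Ba) \<ge> 2" and ib: "card ({a,b,c} \<inter> Bb) \<ge> 2"
    and ic: "card ({a,b,c} \<inter> Bc) \<ge> 2"
    and iab: "card (Ba \<inter> Bb) \<ge> 2" and iac: "card (Ba \<inter> Bc) \<ge> 2"
  shows "\<exists>x. Ba = {b,c,x} \<and> Bb = {a,c,x} \<and> Bc = {a,b,x} \<and> x \<notin> {a,b,c}"
proof -
  have "{a,b,c} \<inter> Ba = {b,c}"
    by (rule card_seteq) (use na ia dist in auto)
  then have "b \<in> Ba" "c \<in> Ba" by auto
  then obtain x where x: "Ba = {b,c,x}" "x \<noteq> b" "x \<noteq> c" using three_ext cBa dist by metis
  have xa: "x \<noteq> a" using na x by auto
  have "{a,b,c} \<inter> Bb = {a,c}"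
    by (rule card_seteq) (use nb ib dist in auto)
  then have "a \<in> Bb" "c \<in> Bb" by auto
  then obtain y where y: "Bb = {a,c,y}" "y \<noteq> a" "y \<noteq> c" using three_ext cBb dist by metis
  have yb: "y \<noteq> b" using nb y by auto
  have "{a,b,c} \<inter> Bc = {a,b}"
    by (rule card_seteq) (use nc ic dist in auto)
  then have "a \<in> Bc" "b \<in> Bc" by auto
  then obtain z where z: "Bc = {a,b,z}" "z \<noteq> a" "z \<noteq> b" using three_ext cBc dist by metis
  have zc: "z \<noteq> c" using nc z by auto
  have "x = y"
  proof (rule ccontr)
    assume "x \<noteq> y"
    then have "Ba \<inter> Bb = {c}" using x y xa yb dist by auto
    then show False using iab by simp
  qed
  moreover have "x = z"
  proof (rule ccontr)
    assume "x \<noteq> z"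
    then have "Ba \<inter> Bc = {b}" using x z xa zc dist by auto
    then show False using iac by simp
  qed
  ultimately show ?thesis using x y z xa by auto
qed

lemma fin4:
  assumes "finite C" "j \<in> C" "card C \<ge> 2"
    and "\<And>X. X \<in> XS \<Longrightarrow> j \<notin> X \<and> card (C \<inter> X) \<ge> card C - 1"
    and "\<Inter> XS = {}" "XS \<noteq> {}"
  shows False
proof -
  have cj: "card (C - {j}) = card C - 1" using assms by simp
  have "\<And>X. X \<in> XS \<Longrightarrow> C \<inter> X = C - {j}"
  proof -
    fix X assume X: "X \<in> XS"
    show "C \<inter> X = C - {j}"
      by (rule card_seteq) (use assms X cj in auto)
  qed
  then have "C - {j} \<subseteq> \<Inter> XS" by blast
  then have "C - {j} = {}" using assms by auto
  then have "C \<subseteq> {j}" by auto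
  then have "card C \<le> card {j}" by (intro card_mono) auto
  then show False using assms by simp
qed


theorem mainTheorem6:
  fixes n :: nat and \<sigma> :: "(nat \<Rightarrow> bool) set"
  assumes "n \<ge> 5"
    and "maximal_simplex n \<sigma>"
    and "covers_all_places n \<sigma>"
  shows "\<forall>v\<in>\<sigma>. nbhd n v \<inter> \<sigma> \<noteq> {}"
proof (intro ballI notI)
  fix v assume vs: "v \<in> \<sigma>" and H: "nbhd n v \<inter> \<sigma> = {}"
  have smp: "is_simplex n \<sigma>" and maxi: "\<And>\<tau>. is_simplex n \<tau> \<Longrightarrow> \<sigma> \<subseteq> \<tau> \<Longrightarrow> \<tau> = \<sigma>"
    using assms(2) unfolding maximal_simplex_def by auto
  have cubes: "\<sigma> \<subseteq> cube n" and fins: "finite \<sigma>"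
    and dist: "\<And>x y. x \<in> \<sigma> \<Longrightarrow> y \<in> \<sigma> \<Longrightarrow> hdist n x y \<le> 3"
    using smp unfolding is_simplex_def by auto
  define D where "D = (\<lambda>w::nat\<Rightarrow>bool. {i\<in>{1..n}. w i \<noteq> v i})"
  have finD: "\<And>w. finite (D w)" by (simp add: D_def)
  have Dsub: "\<And>w. D w \<subseteq> {1..n}" by (auto simp: D_def)
  have hd: "\<And>x y. hdist n x y = card ((D x - D y) \<union> (D y - D x))"
    unfolding hdist_def D_def by (rule arg_cong[where f=card]) auto
  have dv: "\<And>w. hdist n w v = card (D w)" unfolding hdist_def D_def by simp
  have le3: "\<And>w. w \<in> \<sigma> \<Longrightarrow> card (D w) \<le> 3" using dist vs dv by metis
  have vc: "v \<in> cube n" using vs cubes by auto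
  have ge2: "card (D w) \<ge> 2" if w: "w \<in> \<sigma>" "w \<noteq> v" for w
  proof -
    have wc: "w \<in> cube n" using w cubes by auto
    have "D w \<noteq> {}"
    proof
      assume e: "D w = {}"
      have "w = v"
      proof
        fix k show "w k = v k"
        proof (cases "k \<in> {1..n}")
          case True then show ?thesis using e unfolding D_def by auto
        next
          case False then show ?thesis using wc vc unfolding cube_def by auto
        qed
      qed
      then show False using w by simp
    qed
    then have c0: "card (D w) \<noteq> 0" using finD by simp
    have "card (D w) \<noteq> 1"
    proof
      assume "card (D w) = 1"
      then obtain i where i: "D w = {i}" by (meson card_1_singletonE)
      then have iI: "i \<in> {1..n}" using Dsub[of w] by auto
      have "w = flip v i"
      proof
        fix k show "w k = flip v i k"
        proof (cases "k \<in> {1..n}")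
          case True then show ?thesis using i unfolding D_def flip_def
            by (cases "k = i") auto
        next
          case False then show ?thesis using wc vc iI unfolding cube_def flip_def by auto
        qed
      qed
      then have "w \<in> nbhd n v" using iI unfolding nbhd_def by auto
      then show False using H w by auto
    qed
    then show ?thesis using c0 by linarith
  qed
  have int: "card (D x) + card (D y) \<le> 3 + 2 * card (D x \<inter> D y)"
    if "x \<in> \<sigma>" "y \<in> \<sigma>" for x y
    using symdiff_card[OF finD finD, of x y] dist[OF that] hd[of x y] by linarith
  have key: "\<exists>i\<in>{1..n}. \<forall>w\<in>\<sigma>. card (D w) = 3 \<longrightarrow> i \<in> D w"
  proof (rule ccontr)
    assume nk: "\<not> ?thesis"
    then have nk': "\<And>i. i \<in> {1..n} \<Longrightarrow> \<exists>w\<in>\<sigma>. card (D w) = 3 \<and> i \<notin> D w" by blast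
    obtain w0 where w0: "w0 \<in> \<sigma>" "card (D w0) = 3" using nk'[of 1] assms(1) by auto
    obtain a b c where abc: "D w0 = {a,b,c}" "a \<noteq> b" "b \<noteq> c" "a \<noteq> c"
      using w0(2) card_3_iff by metis
    have abcI: "a \<in> {1..n}" "b \<in> {1..n}" "c \<in> {1..n}" using Dsub[of w0] abc by auto
    obtain wa where wa: "wa \<in> \<sigma>" "card (D wa) = 3" "a \<notin> D wa" using nk' abcI by blast
    obtain wb where wb: "wb \<in> \<sigma>" "card (D wb) = 3" "b \<notin> D wb" using nk' abcI by blast
    obtain wc where wc: "wc \<in> \<sigma>" "card (D wc) = 3" "c \<notin> D wc" using nk' abcI by blast
    have ia: "card ({a,b,c} \<inter> D wa) \<ge> 2" using int[OF w0(1) wa(1)] w0(2) wa(2) abc(1) by simp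
    have ib: "card ({a,b,c} \<inter> D wb) \<ge> 2" using int[OF w0(1) wb(1)] w0(2) wb(2) abc(1) by simp
    have ic: "card ({a,b,c} \<inter> D wc) \<ge> 2" using int[OF w0(1) wc(1)] w0(2) wc(2) abc(1) by simp
    have iab: "card (D wa \<inter> D wb) \<ge> 2" using int[OF wa(1) wb(1)] wa(2) wb(2) by simp
    have iac: "card (D wa \<inter> D wc) \<ge> 2" using int[OF wa(1) wc(1)] wa(2) wc(2) by simp
    obtain x where x: "D wa = {b,c,x}" "D wb = {a,c,x}" "D wc = {a,b,x}" "x \<notin> {a,b,c}"
      using comb[OF abc(2-4) wa(2) wb(2) wc(2) wa(3) wb(3) wc(3) ia ib ic iab iac] by blast
    have "\<not> {1..n} \<subseteq> {a,b,c,x}"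
    proof
      assume "{1..n} \<subseteq> {a,b,c,x}"
      then have "card {1..n} \<le> card {a,b,c,x}" by (intro card_mono) auto
      also have "\<dots> \<le> 4" by (simp add: card_insert_if)
      finally show False using assms(1) by simp
    qed
    then obtain j where j: "j \<in> {1..n}" "j \<notin> {a,b,c,x}" by blast
    obtain p q where pq: "p \<in> \<sigma>" "q \<in> \<sigma>" "p j" "\<not> q j"
      using assms(3) j(1) unfolding covers_all_places_def by blast
    obtain w where w: "w \<in> \<sigma>" "j \<in> D w"
    proof (cases "v j")
      case True then show ?thesis using that[of q] pq j(1) unfolding D_def by auto
    next
      case False then show ?thesis using that[of p] pq j(1) unfolding D_def by auto
    qed
    have wv: "w \<noteq> v" using w unfolding D_def by auto
    have c2: "card (D w) \<ge> 2" using ge2[OF w(1) wv] .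
    have c3: "card (D w) \<le> 3" using le3[OF w(1)] .
    show False
    proof (rule fin4[OF finD w(2) c2, of "{D w0, D wa, D wb, D wc}"])
      fix X assume X: "X \<in> {D w0, D wa, D wb, D wc}"
      then obtain y where y: "y \<in> \<sigma>" "card (D y) = 3" "X = D y"
        using w0 wa wb wc by blast
      have "card (D w) + 3 \<le> 3 + 2 * card (D w \<inter> X)" using int[OF w(1) y(1)] y by simp
      then have "card (D w) - 1 \<le> card (D w \<inter> X)" using c3 by linarith
      moreover have "j \<notin> X" using X abc x j by auto
      ultimately show "j \<notin> X \<and> card (D w) - 1 \<le> card (D w \<inter> X)" by simp
    next
      show "\<Inter> {D w0, D wa, D wb, D wc} = {}" using abc x by auto
    qed simp
  qed
  then obtain i where iI: "i \<in> {1..n}" and iw: "\<And>w. w \<in> \<sigma> \<Longrightarrow> card (D w) = 3 \<Longrightarrow> i \<in> D w"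
    by blast
  define u where "u = flip v i"
  have Du: "D u = {i}" using iI unfolding D_def u_def flip_def by auto
  have un: "u \<notin> \<sigma>" using H iI unfolding nbhd_def u_def by (metis IntI empty_iff image_eqI)
  have uc: "u \<in> cube n" using vc iI unfolding cube_def u_def flip_def by auto
  have hu: "hdist n u w \<le> 3 \<and> hdist n w u \<le> 3" if w: "w \<in> \<sigma>" for w
  proof -
    have "card (({i} - D w) \<union> (D w - {i})) \<le> 3"
    proof (cases "card (D w) = 3")
      case True
      then have "i \<in> D w" using iw w by simp
      then have "({i} - D w) \<union> (D w - {i}) = D w - {i}" by auto
      moreover have "card (D w - {i}) \<le> card (D w)" by (rule card_mono) (use finD in auto)
      ultimately show ?thesis using True by simp
    next
      case False
      then have "card (D w) \<le> 2" using le3[OF w] by simp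
      moreover have "card (({i} - D w) \<union> (D w - {i})) \<le> card (insert i (D w))"
        by (rule card_mono) (use finD in auto)
      moreover have "card (insert i (D w)) \<le> card (D w) + 1"
        using finD by (simp add: card_insert_if)
      ultimately show ?thesis by linarith
    qed
    then show ?thesis using hd[of u w] hd[of w u] Du by (simp add: Un_commute)
  qed
  have huu: "hdist n u u = 0" using hd[of u u] by simp
  have "is_simplex n (insert u \<sigma>)"
    unfolding is_simplex_def using fins cubes uc dist hu huu by auto
  then have "insert u \<sigma> = \<sigma>" using maxi by blast
  then show False using un by blast
qed

end
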